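(* If $\sigma^2<\infty$, then as $m\to\infty$, \[\mathbf{P}(N(m)\ge1)\sim c_\mu\mathbf{E}[\xi^*-1]\mu^m=c_\mu\left(\frac{\sigma^2+\mu^2}{\mu}-1\right)\mu^m.\]
   Context: $\xi$ is a random variable on $\{0,1,2,\dots\}$ with $\mathbf{P}(\xi=k)=p_k$, mean $\mu\in(0,1)$ and variance $\sigma^2>0$; $\xi^*$ has the size-biased law $\mathbf{P}(\xi^*=k)=kp_k/\mu$, $k\ge1$. For a rooted tree $T$, $\mathcal{H}(T)$ is its height. $c_\mu>0$ is the constant such that, for a Galton–Watson process $(Z_n)$ with offspring law $\xi$ and $Z_0=1$, $\mathbf{P}(Z_n>0)\sim c_\mu\mu^n$. Let $(\mathcal{T}_j)_{j\ge1}$ be independent Galton–Watson trees with offspring law $\xi$, independent of $\xi^*$, and $N(m)=\sum_{j=1}^{\xi^*-1}\mathbf{1}_{\{\mathcal{H}(\mathcal{T}_j)\ge m\}}$. *)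

theory Defs
  imports "HOL-Probability.Probability" "HOL-Library.Landau_Symbols"
begin

fun iid_sum :: "nat \<Rightarrow> nat pmf \<Rightarrow> nat pmf" where
  "iid_sum 0 X = return_pmf 0"
| "iid_sum (Suc n) X = bind_pmf X (\<lambda>a. bind_pmf (iid_sum n X) (\<lambda>b. return_pmf (a + b)))"

text \<open>Law of Z_n, the n-th generation size of a Galton--Watson process with offspring law p, Z_0 = 1.\<close>
fun gw_gen :: "nat pmf \<Rightarrow> nat \<Rightarrow> nat pmf" where
  "gw_gen p 0 = return_pmf 1"
| "gw_gen p (Suc n) = bind_pmf (gw_gen p n) (\<lambda>z. iid_sum z p)"

definition offspring_mean :: "nat pmf \<Rightarrow> real" where
  "offspring_mean p = measure_pmf.expectation p real"

definition offspring_var :: "nat pmf \<Rightarrow> real" where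
  "offspring_var p = measure_pmf.variance p real"

definition size_biased :: "nat pmf \<Rightarrow> nat pmf" where
  "size_biased p = embed_pmf (\<lambda>k. real k * pmf p k / offspring_mean p)"

text \<open>Law of the indicator 1{H(T) >= m} for a Galton--Watson tree T with offspring law p:
  the height is at least m iff generation m is nonempty.\<close>
definition height_ge_ind :: "nat pmf \<Rightarrow> nat \<Rightarrow> nat pmf" where
  "height_ge_ind p m = map_pmf (\<lambda>z. if z > 0 then 1 else 0) (gw_gen p m)"

text \<open>Law of N(m) = sum_{j=1}^{xi*-1} 1{H(T_j) >= m}, with T_j i.i.d. GW trees independent of xi*.\<close>
definition N_law :: "nat pmf \<Rightarrow> nat \<Rightarrow> nat pmf" where
  "N_law p m = bind_pmf (size_biased p) (\<lambda>k. iid_sum (k - 1) (height_ge_ind p m))"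

end

theory Submission
  imports Defs
begin


lemma iid_sum_Suc_map:
  "iid_sum (Suc n) X = map_pmf (\<lambda>(a,b). a+b) (pair_pmf X (iid_sum n X))"
  by (simp add: pair_pmf_def map_pmf_def bind_assoc_pmf bind_return_pmf)

lemma pmf_iid_sum_0: "pmf (iid_sum n X) 0 = pmf X 0 ^ n"
proof (induction n)
  case 0 then show ?case by simp
next
  case (Suc n)
  have pre: "(\<lambda>(a,b). a+b) -` {0::nat} = {(0::nat,0::nat)}" by auto
  show ?case unfolding iid_sum_Suc_map pmf_map pre measure_pmf_single pmf_pair Suc by simp
qed

lemma prob_ge1: "measure_pmf.prob (M::nat pmf) {1..} = 1 - pmf M 0"
proof -
  have "{1..} = UNIV - {0::nat}" by auto
  then show ?thesis using measure_pmf.prob_compl[of "{0}" M] by (simp add: measure_pmf_single)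
qed

lemma pmf_height0: "pmf (height_ge_ind p m) 0 = 1 - measure_pmf.prob (gw_gen p m) {0<..}"
proof -
  have "(\<lambda>z::nat. if z > 0 then 1 else 0::nat) -` {0} = UNIV - {0<..}" by auto
  then show ?thesis unfolding height_ge_ind_def pmf_map
    using measure_pmf.prob_compl[of "{0<..}" "gw_gen p m"] by simp
qed

lemma prob_N: "measure_pmf.prob (N_law p m) {1..} =
   measure_pmf.expectation (size_biased p) (\<lambda>k. 1 - (1 - measure_pmf.prob (gw_gen p m) {0<..}) ^ (k - 1))"
proof -
  let ?q = "measure_pmf.prob (gw_gen p m) {0<..}"
  have b: "\<bar>(1 - ?q) ^ (k - 1)\<bar> \<le> 1" for k
    by (simp add: power_le_one measure_pmf.prob_le_1)
  have int: "integrable (size_biased p) (\<lambda>k. (1 - ?q) ^ (k - 1))"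
    by (rule measure_pmf.integrable_const_bound[where B=1]) (use b in auto)
  show ?thesis
    unfolding N_law_def prob_ge1 pmf_bind pmf_iid_sum_0 pmf_height0
    using int by (subst Bochner_Integration.integral_diff) auto
qed


lemma sb_density:
  assumes int1: "integrable (measure_pmf p) real" and mu: "0 < offspring_mean p"
  shows "measure_pmf (size_biased p) = density (measure_pmf p) (\<lambda>k. ennreal (real k / offspring_mean p))"
proof -
  define \<mu> where "\<mu> = offspring_mean p"
  define w where "w k = real k * pmf p k / \<mu>" for k
  have nn: "\<And>k. 0 \<le> w k" using mu by (simp add: w_def \<mu>_def)
  have ex: "measure_pmf.expectation p real = \<mu>" by (simp add: \<mu>_def offspring_mean_def)
  have "(\<integral>\<^sup>+k. ennreal (w k) \<partial>count_space UNIV) = (\<integral>\<^sup>+k. ennreal (pmf p k) * ennreal (real k / \<mu>) \<partial>count_space UNIV)"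
    using mu by (intro nn_integral_cong) (simp add: w_def \<mu>_def ennreal_mult'' [symmetric])
  also have "\<dots> = (\<integral>\<^sup>+k. ennreal (real k / \<mu>) \<partial>measure_pmf p)"
    by (simp add: nn_integral_measure_pmf)
  also have "\<dots> = ennreal (\<integral>k. real k / \<mu> \<partial>measure_pmf p)"
    using mu int1 by (intro nn_integral_eq_integral) (auto simp: \<mu>_def)
  also have "\<dots> = 1" using ex mu by (simp add: \<mu>_def)
  finally have one: "(\<integral>\<^sup>+k. ennreal (w k) \<partial>count_space UNIV) = 1" .
  have "measure_pmf (size_biased p) = density (count_space UNIV) (ennreal \<circ> w)"
  proof -
    have "size_biased p = embed_pmf w" unfolding size_biased_def w_def \<mu>_def by (rule refl)
    then show ?thesis using embed_pmf.rep_eq[of w] nn one by simp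
  qed
  also have "\<dots> = density (density (count_space UNIV) (pmf p)) (\<lambda>k. ennreal (real k / \<mu>))"
  proof (subst density_density_eq)
    have "ennreal (w x) = ennreal (pmf p x) * ennreal (real x / \<mu>)" for x
      using mu by (simp add: w_def \<mu>_def ennreal_mult [symmetric])
    then show "density (count_space UNIV) (ennreal \<circ> w) =
      density (count_space UNIV) (\<lambda>x. ennreal (pmf p x) * ennreal (real x / \<mu>))"
      by (simp add: comp_def)
  qed auto
  finally show ?thesis by (simp add: measure_pmf_eq_density[symmetric] \<mu>_def)
qed

theorem corollary3p2:
  fixes p :: "nat pmf" and c :: real
  assumes int1: "integrable (measure_pmf p) real"
    and int2: "integrable (measure_pmf p) (\<lambda>k. (real k)^2)"
    and mu_pos: "0 < offspring_mean p" and mu_lt1: "offspring_mean p < 1"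
    and var_pos: "0 < offspring_var p"
    and c_pos: "0 < c"
    and c_def: "(\<lambda>n. measure_pmf.prob (gw_gen p n) {0<..}) \<sim>[at_top] (\<lambda>n. c * offspring_mean p ^ n)"
  shows "(\<lambda>m. measure_pmf.prob (N_law p m) {1..})
           \<sim>[at_top] (\<lambda>m. c * measure_pmf.expectation (size_biased p) (\<lambda>k. real k - 1) * offspring_mean p ^ m)
       \<and> measure_pmf.expectation (size_biased p) (\<lambda>k. real k - 1)
           = (offspring_var p + (offspring_mean p)^2) / offspring_mean p - 1"
proof -
  define \<mu> where "\<mu> = offspring_mean p"
  define E where "E = measure_pmf.expectation (size_biased p) (\<lambda>k. real k - 1)"
  define q where "q m = measure_pmf.prob (gw_gen p m) {0<..}" for m
  define h where "h x k = (\<Sum>i<k - 1. (1 - x) ^ i)" for x :: real and k :: nat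
  have mu: "0 < \<mu>" using mu_pos by (simp add: \<mu>_def)
  have SB: "measure_pmf (size_biased p) = density (measure_pmf p) (\<lambda>k. ennreal (real k / \<mu>))"
    using sb_density[OF int1 mu_pos] by (simp add: \<mu>_def)
  have intg: "integral\<^sup>L (size_biased p) g = (\<integral>k. real k / \<mu> * g k \<partial>measure_pmf p)" for g :: "nat \<Rightarrow> real"
    unfolding SB using mu by (subst integral_density) auto
  have integ: "integrable (size_biased p) g \<longleftrightarrow> integrable (measure_pmf p) (\<lambda>k. real k / \<mu> * g k)" for g :: "nat \<Rightarrow> real"
    unfolding SB using mu by (subst integrable_density) auto
  have ex1: "measure_pmf.expectation p real = \<mu>" by (simp add: \<mu>_def offspring_mean_def)
  have var: "offspring_var p = measure_pmf.expectation p (\<lambda>k. (real k)^2) - \<mu>^2"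
    unfolding offspring_var_def using measure_pmf.variance_eq[OF int1 int2] ex1 by simp
  have Eeq: "E = (measure_pmf.expectation p (\<lambda>k. (real k)^2) - \<mu>) / \<mu>"
  proof -
    have "E = (\<integral>k. ((real k)^2 - real k) / \<mu> \<partial>measure_pmf p)"
      unfolding E_def intg by (rule Bochner_Integration.integral_cong) (auto simp: field_simps power2_eq_square)
    also have "\<dots> = (\<integral>k. ((real k)^2 - real k) \<partial>measure_pmf p) / \<mu>" by simp
    also have "\<dots> = (measure_pmf.expectation p (\<lambda>k. (real k)^2) - \<mu>) / \<mu>"
      using int1 int2 ex1 by (subst Bochner_Integration.integral_diff) auto
    finally show ?thesis .
  qed
  have second: "E = (offspring_var p + \<mu>^2) / \<mu> - 1"
    unfolding Eeq var using mu by (simp add: field_simps)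
  have Eeq2: "E = measure_pmf.expectation (size_biased p) (\<lambda>k. real (k - 1))"
    unfolding E_def intg by (rule Bochner_Integration.integral_cong) (auto simp: of_nat_diff)
  have q01: "0 \<le> q m" "q m \<le> 1" for m by (auto simp: q_def)
  have hb: "0 \<le> h x k" "h x k \<le> real (k - 1)" if "0 \<le> x" "x \<le> 1" for x k
  proof -
    show "0 \<le> h x k" unfolding h_def using that by (auto intro!: sum_nonneg)
    have "h x k \<le> (\<Sum>i<k - 1. 1)" unfolding h_def using that by (intro sum_mono power_le_one) auto
    then show "h x k \<le> real (k - 1)" by simp
  qed
  define A where "A m = measure_pmf.expectation (size_biased p) (h (q m))" for m
  have LHS: "measure_pmf.prob (N_law p m) {1..} = q m * A m" for m
  proof -
    have "measure_pmf.prob (N_law p m) {1..} = measure_pmf.expectation (size_biased p) (\<lambda>k. q m * h (q m) k)"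
      unfolding prob_N q_def[symmetric] h_def using one_diff_power_eq[of "1 - q m"] by simp
    then show ?thesis unfolding A_def by simp
  qed
  have intk: "integrable (size_biased p) (\<lambda>k. real (k - 1))"
  proof -
    have "integrable (measure_pmf p) (\<lambda>k. ((real k)^2 - real k) / \<mu>)"
      using int1 int2 by auto
    then show ?thesis unfolding integ
    proof (rule Bochner_Integration.integrable_cong[THEN iffD1, rotated 2])
      fix k :: nat
      have "real k * real (k - 1) = (real k)^2 - real k"
        by (cases k) (auto simp: power2_eq_square algebra_simps)
      then show "((real k)^2 - real k) / \<mu> = real k / \<mu> * real (k - 1)" by simp
    qed auto
  qed
  have q0: "q \<longlonglongrightarrow> 0"
  proof -
    have "(\<lambda>n. c * \<mu> ^ n) \<longlonglongrightarrow> c * 0"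
      using mu mu_lt1 by (intro tendsto_intros LIMSEQ_power_zero) (auto simp: \<mu>_def)
    then show ?thesis
      using asymp_equiv_tendsto_transfer[OF asymp_equiv_symI[OF c_def]] unfolding q_def[abs_def] by (simp add: \<mu>_def)
  qed
  have Alim: "A \<longlonglongrightarrow> E"
    unfolding A_def Eeq2
  proof (rule integral_dominated_convergence[where w="\<lambda>k. real (k - 1)"])
    show "integrable (measure_pmf (size_biased p)) (\<lambda>k. real (k - 1))" by (rule intk)
    show "AE x in measure_pmf (size_biased p). (\<lambda>i. h (q i) x) \<longlonglongrightarrow> real (x - 1)"
    proof (rule AE_I2)
      fix k :: nat
      have "(\<lambda>i. h (q i) k) \<longlonglongrightarrow> (\<Sum>i<k - 1. (1 - 0) ^ i)"
        unfolding h_def by (intro tendsto_intros q0)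
      then show "(\<lambda>i. h (q i) k) \<longlonglongrightarrow> real (k - 1)" by simp
    qed
    show "AE x in measure_pmf (size_biased p). norm (h (q i) x) \<le> real (x - 1)" for i
      using hb[OF q01(1)[of i] q01(2)[of i]] by auto
  qed auto
  show ?thesis
    unfolding E_def[symmetric]
  proof (intro conjI)
    show "(\<lambda>m. measure_pmf.prob (N_law p m) {1..}) \<sim>[at_top] (\<lambda>m. c * E * offspring_mean p ^ m)"
    proof (cases "E = 0")
      case False
      have "(\<lambda>m. q m * A m) \<sim>[at_top] (\<lambda>m. (c * offspring_mean p ^ m) * E)"
        using asymp_equiv_mult[OF c_def[folded q_def] tendsto_imp_asymp_equiv_const[OF Alim False]] .
      then show ?thesis unfolding LHS by (simp add: ac_simps)
    next
      case True
      have "A m = 0" for m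
      proof -
        have "A m \<le> measure_pmf.expectation (size_biased p) (\<lambda>k. real (k - 1))"
          unfolding A_def
        proof (rule integral_mono)
          show "integrable (measure_pmf (size_biased p)) (h (q m))"
            by (rule Bochner_Integration.integrable_bound[OF intk]) (use hb[OF q01(1)[of m] q01(2)[of m]] in auto)
        qed (use intk hb[OF q01(1)[of m] q01(2)[of m]] in auto)
        moreover have "0 \<le> A m" unfolding A_def
          using hb[OF q01(1)[of m] q01(2)[of m]] by (auto intro!: Bochner_Integration.integral_nonneg)
        ultimately show ?thesis using True Eeq2 by simp
      qed
      then show ?thesis unfolding LHS True by simp
    qed
  next
    show "E = (offspring_var p + (offspring_mean p)^2) / offspring_mean p - 1"
      using second by (simp add: \<mu>_def)
  qed
qed

end
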